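(* Let $G$ be a vigorous subgroup of $\operatorname{Homeo}(\mathfrak{C})$ generated by its elements of small support. Let $I,K\in K_{\mathfrak{C}}$ with $I\subsetneq K$. Then there exist $J\in K_{\mathfrak{C}}$ with $I\subsetneq J\subsetneq K$ and a group isomorphism $f:G\to\operatorname{pstab}_G(\mathfrak{C}\setminus J)$ such that for every $\gamma\in G$ the homeomorphism $\gamma f$ agrees with $\gamma$ on $I\gamma^{-1}\cap I$.
   Context: $\mathfrak{C}$ denotes a Cantor space (a space homeomorphic to $\{0,1\}^\omega$). Groups of homeomorphisms act on the right, and products are composed left to right. $K_{\mathfrak{C}}$ denotes the set of non-empty proper clopen subsets of $\mathfrak{C}$. For $\gamma\in\operatorname{Homeo}(\mathfrak{C})$, $\operatorname{supp}(\gamma)=\{p\in\mathfrak{C}: p\gamma\neq p\}$. For $G\le\operatorname{Homeo}(\mathfrak{C})$ and $A\subseteq\mathfrak{C}$, $\operatorname{pstab}_G(A)=\{g\in G: pg=p \text{ for all } p\in A\}$. A subset $S\subseteq \operatorname{Homeo}(\mathfrak{C})$ is vigorous if for all clopen $A,B,C\subseteq\mathfrak{C}$ with $B,C$ non-empty proper subsets of $A$ there is $\gamma\in S$ with $\operatorname{supp}(\gamma)\subseteq A$ and $B\gamma\subseteq C$. $G$ is generated by its elements of small support if $G$ is generated by $\{\gamma\in G: \operatorname{supp}(\gamma)\subseteq A \text{ for some } A\in K_{\mathfrak{C}}\}$. *)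

theory Defs
  imports "HOL-Analysis.Analysis"
begin

type_synonym cantor = "nat \<Rightarrow> bool"

definition cantor_top :: "cantor topology" where
  "cantor_top = product_topology (\<lambda>_. discrete_topology (UNIV :: bool set)) UNIV"

definition clopen_C :: "cantor set \<Rightarrow> bool" where
  "clopen_C A \<longleftrightarrow> openin cantor_top A \<and> closedin cantor_top A"

definition K_C :: "cantor set set" where
  "K_C = {A. clopen_C A \<and> A \<noteq> {} \<and> A \<noteq> UNIV}"

definition Homeo_C :: "(cantor \<Rightarrow> cantor) set" where
  "Homeo_C = {g. homeomorphic_map cantor_top cantor_top g}"

text \<open>Right actions: p\<gamma> is written \<gamma> p; the product \<gamma>\<delta> (first \<gamma>, then \<delta>)
is the function \<delta> \<circ> \<gamma>; the inverse is inv \<gamma>.\<close>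

definition supp :: "(cantor \<Rightarrow> cantor) \<Rightarrow> cantor set" where
  "supp g = {p. g p \<noteq> p}"

definition homeo_subgroup :: "(cantor \<Rightarrow> cantor) set \<Rightarrow> bool" where
  "homeo_subgroup G \<longleftrightarrow> G \<subseteq> Homeo_C \<and> id \<in> G \<and>
     (\<forall>g\<in>G. \<forall>h\<in>G. h \<circ> g \<in> G) \<and> (\<forall>g\<in>G. inv g \<in> G)"

definition pstab :: "(cantor \<Rightarrow> cantor) set \<Rightarrow> cantor set \<Rightarrow> (cantor \<Rightarrow> cantor) set" where
  "pstab G A = {g\<in>G. \<forall>p\<in>A. g p = p}"

definition vigorous :: "(cantor \<Rightarrow> cantor) set \<Rightarrow> bool" where
  "vigorous S \<longleftrightarrow> (\<forall>A B C. clopen_C A \<and> clopen_C B \<and> clopen_C C \<and>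
     B \<noteq> {} \<and> B \<subset> A \<and> C \<noteq> {} \<and> C \<subset> A \<longrightarrow>
     (\<exists>g\<in>S. supp g \<subseteq> A \<and> g ` B \<subseteq> C))"

definition generated_homeo :: "(cantor \<Rightarrow> cantor) set \<Rightarrow> (cantor \<Rightarrow> cantor) set" where
  "generated_homeo S = \<Inter>{H. homeo_subgroup H \<and> S \<subseteq> H}"

definition small_support_elems :: "(cantor \<Rightarrow> cantor) set \<Rightarrow> (cantor \<Rightarrow> cantor) set" where
  "small_support_elems G = {g\<in>G. \<exists>A\<in>K_C. supp g \<subseteq> A}"

definition gen_by_small_support :: "(cantor \<Rightarrow> cantor) set \<Rightarrow> bool" where
  "gen_by_small_support G \<longleftrightarrow> G = generated_homeo (small_support_elems G)"

definition group_iso_on ::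
  "((cantor \<Rightarrow> cantor) \<Rightarrow> (cantor \<Rightarrow> cantor)) \<Rightarrow> (cantor \<Rightarrow> cantor) set \<Rightarrow> (cantor \<Rightarrow> cantor) set \<Rightarrow> bool" where
  "group_iso_on f G H \<longleftrightarrow> bij_betw f G H \<and> (\<forall>g\<in>G. \<forall>h\<in>G. f (h \<circ> g) = f h \<circ> f g)"

end

theory Submission
  imports Defs
begin


lemma top_C: "topspace cantor_top = UNIV"
  by (simp add: cantor_top_def topspace_product_topology)

lemma clopen_UNIV: "clopen_C UNIV"
  unfolding clopen_C_def using top_C by (metis closedin_topspace openin_topspace)

lemma clopen_Int: "clopen_C A \<Longrightarrow> clopen_C B \<Longrightarrow> clopen_C (A \<inter> B)"
  unfolding clopen_C_def by auto

lemma clopen_Un: "clopen_C A \<Longrightarrow> clopen_C B \<Longrightarrow> clopen_C (A \<union> B)"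
  unfolding clopen_C_def by auto

lemma clopen_Diff: "clopen_C A \<Longrightarrow> clopen_C B \<Longrightarrow> clopen_C (A - B)"
  unfolding clopen_C_def by auto

lemma clopen_coord: "clopen_C {q. q n = b}"
proof -
  have c: "continuous_map cantor_top (discrete_topology (UNIV::bool set)) (\<lambda>x. x n)"
    unfolding cantor_top_def by (rule continuous_map_product_projection) simp
  have e: "{q. q n = b} = {x \<in> topspace cantor_top. x n \<in> {b}}" by (simp add: top_C)
  show ?thesis unfolding clopen_C_def e
    using openin_continuous_map_preimage[OF c, of "{b}"] closedin_continuous_map_preimage[OF c, of "{b}"]
    by auto
qed

lemma clopen_split:
  assumes "clopen_C X" "X \<noteq> {}"
  shows "\<exists>Y. clopen_C Y \<and> Y \<noteq> {} \<and> Y \<subset> X"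
proof -
  obtain p where p: "p \<in> X" using assms by auto
  have "openin cantor_top X" using assms unfolding clopen_C_def by auto
  then obtain U where U: "finite {i \<in> UNIV. U i \<noteq> topspace (discrete_topology (UNIV::bool set))}"
     "p \<in> Pi\<^sub>E UNIV U" "Pi\<^sub>E UNIV U \<subseteq> X"
    unfolding cantor_top_def openin_product_topology_alt using p by blast
  then obtain n where n: "n \<notin> {i \<in> UNIV. U i \<noteq> topspace (discrete_topology (UNIV::bool set))}"
    using ex_new_if_finite[OF infinite_UNIV_nat] by blast
  hence Un: "U n = UNIV" by simp
  define p' where "p' = p(n := \<not> p n)"
  have "p' \<in> Pi\<^sub>E UNIV U" using U(2) Un unfolding p'_def by (auto simp: PiE_def Pi_def)
  hence p'X: "p' \<in> X" using U(3) by auto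
  define Y where "Y = X \<inter> {q. q n = p n}"
  have c: "clopen_C Y" unfolding Y_def by (rule clopen_Int[OF assms(1) clopen_coord])
  have pY: "p \<in> Y" unfolding Y_def using p by simp
  have n: "Y \<noteq> {}" using pY by blast
  have np: "p' \<notin> Y" unfolding Y_def p'_def by simp
  have s1: "Y \<subseteq> X" unfolding Y_def by blast
  have s2: "Y \<noteq> X" using np p'X by blast
  have s: "Y \<subset> X" using s1 s2 by blast
  show ?thesis using c n s by blast
qed

lemma homeo_clopen:
  assumes "g \<in> Homeo_C" "clopen_C A" shows "clopen_C (g ` A)"
  using assms unfolding Homeo_C_def clopen_C_def
  by (metis homeomorphic_map_closedness_eq homeomorphic_map_openness_eq mem_Collect_eq)

lemma homeo_bij: "g \<in> Homeo_C \<Longrightarrow> bij g"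
  unfolding Homeo_C_def bij_def
  using homeomorphic_imp_surjective_map homeomorphic_imp_injective_map top_C by fastforce



lemma hsG:
  assumes "homeo_subgroup G" "g \<in> G"
  shows "bij g" "inv g \<in> G" "g \<in> Homeo_C"
  using assms homeo_bij unfolding homeo_subgroup_def by auto

lemma hs_comp: "homeo_subgroup G \<Longrightarrow> a \<in> G \<Longrightarrow> b \<in> G \<Longrightarrow> a \<circ> b \<in> G"
  unfolding homeo_subgroup_def by auto

lemma hs_id: "homeo_subgroup G \<Longrightarrow> id \<in> G"
  unfolding homeo_subgroup_def by auto

lemma bij_inv_l: "bij g \<Longrightarrow> inv g (g x) = x"
  by (simp add: bij_is_inj)
lemma bij_inv_r: "bij g \<Longrightarrow> g (inv g x) = x"
  by (simp add: bij_is_surj surj_f_inv_f)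

lemma fix_inv: "bij g \<Longrightarrow> g p = p \<Longrightarrow> inv g p = p"
  by (metis bij_inv_l[of g p])

lemma fix_pres: "inj g \<Longrightarrow> \<forall>x. x \<notin> A \<longrightarrow> g x = x \<Longrightarrow> a \<in> A \<Longrightarrow> g a \<in> A"
proof (rule ccontr)
  assume "inj g" "\<forall>x. x \<notin> A \<longrightarrow> g x = x" "a \<in> A" "g a \<notin> A"
  hence "g (g a) = g a" by blast
  hence "g a = a" using `inj g` by (simp add: inj_eq)
  thus False using `a \<in> A` `g a \<notin> A` by simp
qed

lemma vig:
  assumes "vigorous G" "clopen_C A" "clopen_C B" "clopen_C C" "B \<noteq> {}" "B \<subset> A" "C \<noteq> {}" "C \<subset> A"
  shows "\<exists>g\<in>G. (\<forall>x. x \<notin> A \<longrightarrow> g x = x) \<and> g ` B \<subseteq> C"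
proof -
  have "\<exists>g\<in>G. supp g \<subseteq> A \<and> g ` B \<subseteq> C"
    using assms unfolding vigorous_def by blast
  then obtain g where g: "g \<in> G" "supp g \<subseteq> A" "g ` B \<subseteq> C" by blast
  have "\<forall>x. x \<notin> A \<longrightarrow> g x = x" using g(2) unfolding supp_def by auto
  thus ?thesis using g(1,3) by blast
qed

lemma GL:
  assumes hs: "homeo_subgroup G" and vg: "vigorous G"
    and X: "clopen_C X" and I: "clopen_C I" "I \<subseteq> X" "X - I \<noteq> {}"
    and I1: "clopen_C I1" "I1 \<noteq> {}" "I1 \<subset> I"
    and RG: "R \<subseteq> G" and Rc: "\<forall>a\<in>R. \<forall>b\<in>R. a \<circ> b \<in> R" and Ri: "\<forall>a\<in>R. inv a \<in> R"
    and RI: "\<forall>x\<in>G. (\<forall>p. p \<notin> I \<longrightarrow> x p = p) \<longrightarrow> x \<in> R"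
    and RX: "\<forall>x\<in>G. (\<forall>p. p \<notin> X - I1 \<longrightarrow> x p = p) \<longrightarrow> x \<in> R"
    and x: "x \<in> G" "\<forall>p. p \<notin> X \<longrightarrow> x p = p"
    and Z: "clopen_C Z" "Z \<noteq> {}" "Z \<subseteq> X" "\<forall>p\<in>Z. x p = p"
  shows "x \<in> R"
proof -
  have I2c: "clopen_C (I - I1)" using I I1 clopen_Diff by auto
  have I2ne: "I - I1 \<noteq> {}" "I - I1 \<subset> I" using I1 by auto
  have "\<exists>y\<in>R. (\<forall>p. p \<notin> X \<longrightarrow> y p = p) \<and> y ` I1 \<subseteq> Z"
  proof (cases "Z \<inter> I = {}")
    case True
    obtain y1 where y1: "y1 \<in> G" "\<forall>p. p \<notin> I \<longrightarrow> y1 p = p" "y1 ` I1 \<subseteq> I - I1"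
      using vig[OF vg I(1) I1(1) I2c I1(2) I1(3) I2ne] by blast
    have XI1: "clopen_C (X - I1)" using X I1 clopen_Diff by auto
    have a: "I - I1 \<subset> X - I1" using I(2,3) I1(3) by blast
    have b1: "Z \<subseteq> X - I1" using True Z(3) I1(3) by auto
    have b2: "Z \<noteq> X - I1"
    proof
      assume eq: "Z = X - I1"
      obtain a where "a \<in> I - I1" using I2ne(1) by blast
      hence "a \<in> Z" "a \<in> I" using eq I(2) by auto
      thus False using True by auto
    qed
    have b: "Z \<subset> X - I1" using b1 b2 by blast
    obtain y2 where y2: "y2 \<in> G" "\<forall>p. p \<notin> X - I1 \<longrightarrow> y2 p = p" "y2 ` (I - I1) \<subseteq> Z"
      using vig[OF vg XI1 I2c Z(1) I2ne(1) a Z(2) b] by blast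
    have "y1 \<in> R" using RI y1(1,2) by blast
    have "y2 \<in> R" using RX y2(1,2) by blast
    hence "y2 \<circ> y1 \<in> R" using Rc `y1 \<in> R` by blast
    moreover have "\<forall>p. p \<notin> X \<longrightarrow> (y2 \<circ> y1) p = p" using y1(2) y2(2) I(2) by auto
    moreover have "(y2 \<circ> y1) ` I1 \<subseteq> Z" using y1 y2 by (auto simp: image_subset_iff)
    ultimately show ?thesis by blast
  next
    case False
    show ?thesis
    proof (cases "I \<subseteq> Z")
      case True
      have "id \<in> R" using RI hs_id[OF hs] by auto
      moreover have "id ` I1 \<subseteq> Z" using True I1(3) by auto
      ultimately show ?thesis by (intro bexI[of _ id]) auto
    next
      case False2: False
      have Qc: "clopen_C (Z \<inter> I)" using Z I clopen_Int by auto
      have "Z \<inter> I \<subset> I" using False2 by auto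
      then obtain y where y: "y \<in> G" "\<forall>p. p \<notin> I \<longrightarrow> y p = p" "y ` I1 \<subseteq> Z \<inter> I"
        using vig[OF vg I(1) I1(1) Qc I1(2) I1(3) False] by blast
      have "y \<in> R" using RI y(1,2) by blast
      moreover have "\<forall>p. p \<notin> X \<longrightarrow> y p = p" using y(2) I(2) by blast
      moreover have "y ` I1 \<subseteq> Z" using y(3) by blast
      ultimately show ?thesis by blast
    qed
  qed
  then obtain y where y: "y \<in> R" "\<forall>p. p \<notin> X \<longrightarrow> y p = p" "y ` I1 \<subseteq> Z" by blast
  have yG: "y \<in> G" using y RG by auto
  have bjy: "bij y" using hsG[OF hs yG] by auto
  define x' where "x' = inv y \<circ> x \<circ> y"
  have x'G: "x' \<in> G" unfolding x'_def by (intro hs_comp[OF hs] hsG(2)[OF hs yG] x(1) yG)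
  have "\<forall>p. p \<notin> X - I1 \<longrightarrow> x' p = p"
  proof (intro allI impI)
    fix p assume p: "p \<notin> X - I1"
    show "x' p = p"
    proof (cases "p \<in> X")
      case True
      hence "p \<in> I1" using p by auto
      hence "y p \<in> Z" using y by auto
      thus ?thesis unfolding x'_def using Z by (simp add: bij_inv_l[OF bjy])
    next
      case False
      thus ?thesis unfolding x'_def using x y fix_inv[OF bjy, of p] by simp
    qed
  qed
  hence "x' \<in> R" using RX x'G by auto
  moreover have "inv y \<in> R" using Ri y(1) by blast
  ultimately have "y \<circ> x' \<circ> inv y \<in> R" using Rc y(1) by blast
  moreover have "y \<circ> x' \<circ> inv y = x"
    unfolding x'_def by (rule ext) (simp add: bij_inv_r[OF bjy])
  ultimately show ?thesis by simp
qed



definition conjF :: "(cantor \<Rightarrow> cantor) \<Rightarrow> (cantor \<Rightarrow> cantor) \<Rightarrow> cantor set \<Rightarrow> (cantor \<Rightarrow> cantor) \<Rightarrow> (cantor \<Rightarrow> cantor)" where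
  "conjF \<phi> \<psi> J \<gamma> = (\<lambda>p. if p \<in> J then \<phi> (\<gamma> (\<psi> p)) else p)"

lemma conjF_comp:
  assumes f1: "\<forall>x. \<psi> (\<phi> x) = x" and f2: "\<forall>x. \<phi> x \<in> J"
  shows "conjF \<phi> \<psi> J (a \<circ> b) = conjF \<phi> \<psi> J a \<circ> conjF \<phi> \<psi> J b"
  by (rule ext) (simp add: conjF_def f1 f2)

lemma conjF_id:
  assumes f3: "\<forall>p\<in>J. \<phi> (\<psi> p) = p"
  shows "conjF \<phi> \<psi> J id = id"
  by (rule ext) (simp add: conjF_def f3)

lemma conjF_inj:
  assumes f1: "\<forall>x. \<psi> (\<phi> x) = x" and f2: "\<forall>x. \<phi> x \<in> J"
    and eq: "conjF \<phi> \<psi> J a = conjF \<phi> \<psi> J b"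
  shows "a = b"
proof (rule ext)
  fix x
  have "conjF \<phi> \<psi> J a (\<phi> x) = conjF \<phi> \<psi> J b (\<phi> x)" using eq by simp
  hence "\<phi> (a x) = \<phi> (b x)" by (simp add: conjF_def f1 f2)
  hence "\<psi> (\<phi> (a x)) = \<psi> (\<phi> (b x))" by simp
  thus "a x = b x" using f1 by simp
qed

lemma conjF_inv:
  assumes f1: "\<forall>x. \<psi> (\<phi> x) = x" and f2: "\<forall>x. \<phi> x \<in> J" and f3: "\<forall>p\<in>J. \<phi> (\<psi> p) = p"
    and b: "bij a"
  shows "conjF \<phi> \<psi> J (inv a) = inv (conjF \<phi> \<psi> J a)"
proof -
  have 1: "conjF \<phi> \<psi> J a \<circ> conjF \<phi> \<psi> J (inv a) = id"
    using conjF_comp[OF f1 f2, of a "inv a"] conjF_id[of J \<phi> \<psi>, OF f3]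
    by (simp add: surj_iff[THEN iffD1, OF bij_is_surj[OF b]])
  have 2: "conjF \<phi> \<psi> J (inv a) \<circ> conjF \<phi> \<psi> J a = id"
    using conjF_comp[OF f1 f2, of "inv a" a] conjF_id[of J \<phi> \<psi>, OF f3]
    by (simp add: inj_iff[THEN iffD1, OF bij_is_inj[OF b]])
  show ?thesis using inv_unique_comp[OF 1 2] by simp
qed

lemma conjF_LL:
  assumes f1: "\<forall>x. \<psi> (\<phi> x) = x" and f2: "\<forall>x. \<phi> x \<in> J" and f3: "\<forall>p\<in>J. \<phi> (\<psi> p) = p"
    and bh: "bij h" and ig: "inj \<gamma>" and hA: "\<forall>x\<in>A. h x = \<phi> x" and gA: "\<forall>x. x \<notin> A \<longrightarrow> \<gamma> x = x"
  shows "conjF \<phi> \<psi> J \<gamma> = h \<circ> \<gamma> \<circ> inv h"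
proof (rule ext)
  fix p
  define a where "a = inv h p"
  have ha: "h a = p" unfolding a_def by (rule bij_inv_r[OF bh])
  show "conjF \<phi> \<psi> J \<gamma> p = (h \<circ> \<gamma> \<circ> inv h) p"
  proof (cases "a \<in> A")
    case True
    have p: "p = \<phi> a" using ha hA True by simp
    have "\<gamma> a \<in> A" using fix_pres[OF ig gA True] .
    hence "h (\<gamma> a) = \<phi> (\<gamma> a)" using hA by simp
    thus ?thesis unfolding conjF_def using p f1 f2 a_def[symmetric] by simp
  next
    case False
    have r: "(h \<circ> \<gamma> \<circ> inv h) p = p" using False gA ha a_def by simp
    show ?thesis
    proof (cases "p \<in> J")
      case True
      define x where "x = \<psi> p"
      have px: "\<phi> x = p" using f3 True x_def by simp
      have "x \<notin> A"
      proof
        assume "x \<in> A"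
        hence "h x = p" using hA px by simp
        hence "x = a" using ha bh by (metis bij_inv_l)
        thus False using False `x \<in> A` by simp
      qed
      hence "conjF \<phi> \<psi> J \<gamma> p = p" unfolding conjF_def using True gA px x_def by simp
      thus ?thesis using r by simp
    next
      case False
      thus ?thesis using r unfolding conjF_def by simp
    qed
  qed
qed



lemma FRAG:
  assumes hs: "homeo_subgroup G" and vg: "vigorous G"
    and J: "clopen_C J" "J \<noteq> {}" "J \<noteq> UNIV"
    and Rc: "\<forall>a\<in>R. \<forall>b\<in>R. a \<circ> b \<in> R"
    and H: "\<And>x Z. x \<in> G \<Longrightarrow> \<forall>p. p \<notin> J \<longrightarrow> x p = p \<Longrightarrow> clopen_C Z \<Longrightarrow> Z \<noteq> {}
              \<Longrightarrow> Z \<subseteq> J \<Longrightarrow> \<forall>p\<in>Z. x p = p \<Longrightarrow> x \<in> R"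
    and d: "\<delta> \<in> G" "\<forall>p. p \<notin> J \<longrightarrow> \<delta> p = p"
  shows "\<delta> \<in> R"
proof -
  have bd: "bij \<delta>" using hsG[OF hs d(1)] by simp
  have dJ: "\<forall>p\<in>J. \<delta> p \<in> J" using fix_pres[OF bij_is_inj[OF bd] d(2)] by blast
  have dH: "\<delta> \<in> Homeo_C" using hsG[OF hs d(1)] by simp
  obtain Ya where Ya: "clopen_C Ya" "Ya \<noteq> {}" "Ya \<subset> J" using clopen_split[OF J(1,2)] by blast
  have JYa: "clopen_C (J - Ya)" "J - Ya \<noteq> {}" using clopen_Diff[OF J(1) Ya(1)] Ya(3) by auto
  obtain Yb where Yb: "clopen_C Yb" "Yb \<noteq> {}" "Yb \<subset> J - Ya" using clopen_split[OF JYa] by blast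
  have "\<exists>Y. clopen_C Y \<and> Y \<noteq> {} \<and> Y \<subseteq> J \<and> Y \<union> \<delta> ` Y \<noteq> J"
  proof (cases "Ya \<union> \<delta> ` Ya = J")
    case False
    then show ?thesis using Ya by blast
  next
    case True
    have "\<delta> ` Yb \<subseteq> Ya"
    proof
      fix q assume "q \<in> \<delta> ` Yb"
      then obtain y where y: "y \<in> Yb" "q = \<delta> y" by blast
      have "q \<in> J" using y dJ Yb(3) by blast
      show "q \<in> Ya"
      proof (rule ccontr)
        assume "q \<notin> Ya"
        hence "q \<in> \<delta> ` Ya" using True `q \<in> J` by blast
        then obtain a where a: "a \<in> Ya" "q = \<delta> a" by blast
        hence "a = y" using y bij_is_inj[OF bd] by (metis injD)
        thus False using a y Yb(3) by blast
      qed
    qed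
    moreover obtain e where e: "e \<in> J - Ya - Yb" using Yb(3) by blast
    ultimately have "Yb \<union> \<delta> ` Yb \<noteq> J" by blast
    thus ?thesis using Yb by blast
  qed
  then obtain Y where Y: "clopen_C Y" "Y \<noteq> {}" "Y \<subseteq> J" "Y \<union> \<delta> ` Y \<noteq> J" by blast
  define W where "W = Y \<union> \<delta> ` Y"
  have Wc: "clopen_C W" unfolding W_def using clopen_Un[OF Y(1) homeo_clopen[OF dH Y(1)]] .
  have WJ: "W \<subseteq> J" unfolding W_def using Y(3) dJ by blast
  have JW: "clopen_C (J - W)" "J - W \<noteq> {}" using clopen_Diff[OF J(1) Wc] WJ Y(4) W_def by auto
  obtain T where T: "clopen_C T" "T \<noteq> {}" "T \<subset> J - W" using clopen_split[OF JW] by blast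
  obtain o1 where o1: "o1 \<notin> J" using J(3) by blast
  have UW: "clopen_C (UNIV - W)" using clopen_Diff[OF clopen_UNIV Wc] .
  have s1: "J - W \<subset> UNIV - W" using o1 WJ by blast
  have s2: "T \<subset> UNIV - W" using o1 WJ T(3) by blast
  obtain c where c: "c \<in> G" "\<forall>x. x \<notin> UNIV - W \<longrightarrow> c x = x" "c ` (J - W) \<subseteq> T"
    using vig[OF vg UW JW(1) T(1) JW(2) s1 T(2) s2] by blast
  have bc: "bij c" using hsG[OF hs c(1)] by simp
  have cW: "\<forall>x\<in>W. c x = x" using c(2) by blast
  define u where "u = c \<circ> \<delta> \<circ> inv c"
  have uG: "u \<in> G" unfolding u_def by (intro hs_comp[OF hs] c(1) d(1) hsG(2)[OF hs c(1)])
  have bu: "bij u" using hsG[OF hs uG] by simp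
  have ufix: "\<forall>p. p \<notin> W \<union> T \<longrightarrow> u p = p"
  proof (intro allI impI)
    fix p assume p: "p \<notin> W \<union> T"
    define q where "q = inv c p"
    have cq: "c q = p" unfolding q_def by (rule bij_inv_r[OF bc])
    have "q \<notin> J"
    proof
      assume "q \<in> J"
      show False
      proof (cases "q \<in> W")
        case True
        thus False using cW cq p by auto
      next
        case False
        hence "c q \<in> T" using c(3) `q \<in> J` by blast
        thus False using cq p by auto
      qed
    qed
    hence "\<delta> q = q" using d(2) by blast
    thus "u p = p" unfolding u_def using cq q_def by simp
  qed
  have uY: "\<forall>y\<in>Y. u y = \<delta> y"
  proof
    fix y assume y: "y \<in> Y"
    have "c y = y" using cW y W_def by blast
    hence "inv c y = y" by (rule fix_inv[OF bc])
    moreover have "c (\<delta> y) = \<delta> y" using cW y W_def by blast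
    ultimately show "u y = \<delta> y" unfolding u_def by simp
  qed
  have WTJ: "W \<union> T \<subseteq> J" using WJ T(3) by blast
  have ufJ: "\<forall>p. p \<notin> J \<longrightarrow> u p = p" using ufix WTJ by blast
  have Zu: "clopen_C (J - W - T)" "J - W - T \<noteq> {}" "J - W - T \<subseteq> J" "\<forall>p\<in>J - W - T. u p = p"
    using clopen_Diff[OF JW(1) T(1)] T(3) ufix by auto
  have uR: "u \<in> R" using H[OF uG ufJ Zu] .
  define v where "v = inv u \<circ> \<delta>"
  have vG: "v \<in> G" unfolding v_def by (intro hs_comp[OF hs] d(1) hsG(2)[OF hs uG])
  have vfJ: "\<forall>p. p \<notin> J \<longrightarrow> v p = p"
    using d(2) ufJ fix_inv[OF bu] unfolding v_def by simp
  have vY: "\<forall>p\<in>Y. v p = p"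
    using uY bij_inv_l[OF bu] unfolding v_def by (metis comp_apply)
  have vR: "v \<in> R" using H[OF vG vfJ Y(1,2,3) vY] .
  have "u \<circ> v = \<delta>" unfolding v_def by (rule ext) (simp add: bij_inv_r[OF bu])
  thus ?thesis using Rc uR vR by metis
qed



theorem lemma2p11:
  assumes "homeo_subgroup G" and "vigorous G" and "gen_by_small_support G"
    and "I \<in> K_C" and "K \<in> K_C" and "I \<subset> K"
  shows "\<exists>J\<in>K_C. I \<subset> J \<and> J \<subset> K \<and>
    (\<exists>f. group_iso_on f G (pstab G (UNIV - J)) \<and>
         (\<forall>g\<in>G. \<forall>p. p \<in> I \<and> g p \<in> I \<longrightarrow> f g p = g p))"
proof -
  note hs = assms(1) and vg = assms(2)
  have Ic: "clopen_C I" "I \<noteq> {}" "I \<noteq> UNIV" using assms(4) unfolding K_C_def by auto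
  have Kc: "clopen_C K" "K \<noteq> {}" "K \<noteq> UNIV" using assms(5) unfolding K_C_def by auto
  define L where "L = UNIV - I"
  have Lc: "clopen_C L" "L \<noteq> {}" unfolding L_def using clopen_Diff[OF clopen_UNIV Ic(1)] Ic(3) by auto
  obtain I1 where I1: "clopen_C I1" "I1 \<noteq> {}" "I1 \<subset> I" using clopen_split[OF Ic(1,2)] by blast
  have KI: "clopen_C (K - I)" "K - I \<noteq> {}" using clopen_Diff[OF Kc(1) Ic(1)] assms(6) by auto
  obtain T where T: "clopen_C T" "T \<noteq> {}" "T \<subset> K - I" using clopen_split[OF KI] by blast
  have A1: "clopen_C (I1 \<union> L)" using clopen_Un[OF I1(1) Lc(1)] .
  have A2: "L \<subset> I1 \<union> L" using I1 L_def by auto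
  have TL: "T \<subseteq> L" using T(3) L_def by auto
  have A3: "T \<subset> I1 \<union> L"
  proof -
    obtain i where "i \<in> I1" using I1(2) by blast
    hence "i \<notin> T" "i \<in> I1 \<union> L" using T(3) I1(3) by auto
    thus ?thesis using TL by blast
  qed
  obtain g where g: "g \<in> G" "\<forall>x. x \<notin> I1 \<union> L \<longrightarrow> g x = x" "g ` L \<subseteq> T"
    using vig[OF vg A1 Lc(1) T(1) Lc(2) A2 T(2) A3] by blast
  have bg: "bij g" using hsG[OF hs g(1)] by simp
  have gH: "g \<in> Homeo_C" using hsG[OF hs g(1)] by simp
  have gfix: "\<forall>x\<in>I - I1. g x = x" using g(2) L_def by auto
  define J where "J = I \<union> g ` L"
  have Jc: "clopen_C J" unfolding J_def using clopen_Un[OF Ic(1) homeo_clopen[OF gH Lc(1)]] .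
  have gLI: "g ` L \<inter> I = {}" using g(3) T(3) by blast
  have gLne: "g ` L \<noteq> {}" using Lc(2) by blast
  have IJ: "I \<subset> J" unfolding J_def using gLI gLne by blast
  have JK: "J \<subset> K"
  proof -
    have "J \<subseteq> K" unfolding J_def using g(3) T(3) assms(6) by blast
    moreover obtain e where "e \<in> K - I - T" using T(3) by blast
    moreover hence "e \<notin> J" unfolding J_def using g(3) by blast
    ultimately show ?thesis by blast
  qed
  have JKC: "J \<in> K_C" unfolding K_C_def using Jc IJ JK Kc(3) by blast
  define \<phi> where "\<phi> = (\<lambda>x. if x \<in> I then x else g x)"
  define \<psi> where "\<psi> = (\<lambda>p. if p \<in> I then p else inv g p)"
  have f1: "\<forall>x. \<psi> (\<phi> x) = x"
  proof
    fix x show "\<psi> (\<phi> x) = x"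
    proof (cases "x \<in> I")
      case True thus ?thesis unfolding \<phi>_def \<psi>_def by simp
    next
      case False
      hence "g x \<notin> I" using gLI L_def by blast
      thus ?thesis using False unfolding \<phi>_def \<psi>_def by (simp add: bij_inv_l[OF bg])
    qed
  qed
  have f2: "\<forall>x. \<phi> x \<in> J" unfolding \<phi>_def J_def L_def by auto
  have f3: "\<forall>p\<in>J. \<phi> (\<psi> p) = p"
  proof
    fix p assume "p \<in> J"
    show "\<phi> (\<psi> p) = p"
    proof (cases "p \<in> I")
      case True thus ?thesis unfolding \<phi>_def \<psi>_def by simp
    next
      case False
      then obtain x where x: "x \<in> L" "p = g x" using `p \<in> J` J_def by blast
      hence "inv g p = x" using bij_inv_l[OF bg] by simp
      thus ?thesis using False x L_def unfolding \<phi>_def \<psi>_def by simp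
    qed
  qed
  define F where "F = conjF \<phi> \<psi> J"
  have Fcomp: "\<And>a b. F (a \<circ> b) = F a \<circ> F b" unfolding F_def using conjF_comp[OF f1 f2] .
  have Fid: "F id = id" unfolding F_def using conjF_id[of J \<phi> \<psi>, OF f3] .
  have Finv: "\<And>a. bij a \<Longrightarrow> F (inv a) = inv (F a)" unfolding F_def using conjF_inv[OF f1 f2 f3] .
  have FI: "\<And>x. x \<in> G \<Longrightarrow> \<forall>p. p \<notin> I \<longrightarrow> x p = p \<Longrightarrow> F x = x"
  proof -
    fix x assume x: "x \<in> G" "\<forall>p. p \<notin> I \<longrightarrow> x p = p"
    have "F x = id \<circ> x \<circ> inv id" unfolding F_def
      by (rule conjF_LL[OF f1 f2 f3 bij_id bij_is_inj[OF hsG(1)[OF hs x(1)]] _ x(2)])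
         (simp add: \<phi>_def)
    thus "F x = x" by simp
  qed
  have gphi: "\<forall>x\<in>UNIV - I1. g x = \<phi> x" using gfix unfolding \<phi>_def by auto
  have FX: "\<And>x. x \<in> G \<Longrightarrow> \<forall>p. p \<notin> UNIV - I1 \<longrightarrow> x p = p \<Longrightarrow> F x = g \<circ> x \<circ> inv g"
    unfolding F_def
    using conjF_LL[OF f1 f2 f3 bg bij_is_inj[OF hsG(1)[OF hs]] gphi] by blast
  define S where "S = {\<gamma>\<in>G. F \<gamma> \<in> G}"
  have SG: "S \<subseteq> G" unfolding S_def by blast
  have Sc: "\<forall>a\<in>S. \<forall>b\<in>S. a \<circ> b \<in> S"
    unfolding S_def using Fcomp hs_comp[OF hs] by auto
  have Si: "\<forall>a\<in>S. inv a \<in> S"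
  proof
    fix a assume a: "a \<in> S"
    hence "a \<in> G" "F a \<in> G" unfolding S_def by auto
    thus "inv a \<in> S" unfolding S_def using Finv[OF hsG(1)[OF hs]] hsG(2)[OF hs] by auto
  qed
  have SI: "\<forall>x\<in>G. (\<forall>p. p \<notin> I \<longrightarrow> x p = p) \<longrightarrow> x \<in> S"
    unfolding S_def using FI by auto
  have SX: "\<forall>x\<in>G. (\<forall>p. p \<notin> UNIV - I1 \<longrightarrow> x p = p) \<longrightarrow> x \<in> S"
  proof (intro ballI impI)
    fix x assume x: "x \<in> G" "\<forall>p. p \<notin> UNIV - I1 \<longrightarrow> x p = p"
    have "g \<circ> x \<circ> inv g \<in> G" by (intro hs_comp[OF hs] g(1) x(1) hsG(2)[OF hs g(1)])
    thus "x \<in> S" unfolding S_def using FX[OF x] x(1) by simp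
  qed
  have UI: "UNIV - I \<noteq> {}" using Ic(3) by blast
  have small: "small_support_elems G \<subseteq> S"
  proof
    fix x assume "x \<in> small_support_elems G"
    then obtain A where x: "x \<in> G" "A \<in> K_C" "supp x \<subseteq> A" unfolding small_support_elems_def by blast
    have Ac: "clopen_C A" "A \<noteq> UNIV" using x(2) unfolding K_C_def by auto
    have Zc: "clopen_C (UNIV - A)" using clopen_Diff[OF clopen_UNIV Ac(1)] .
    have Zn: "UNIV - A \<noteq> {}" using Ac(2) by blast
    have Zf: "\<forall>p\<in>UNIV - A. x p = p" using x(3) unfolding supp_def by blast
    show "x \<in> S"
      by (rule GL[OF hs vg clopen_UNIV Ic(1) _ UI I1 SG Sc Si SI SX x(1) _ Zc Zn _ Zf]) auto
  qed
  have Shs: "homeo_subgroup S"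
    unfolding homeo_subgroup_def
  proof (intro conjI)
    show "S \<subseteq> Homeo_C" using SG hs unfolding homeo_subgroup_def by blast
    show "id \<in> S" unfolding S_def using Fid hs_id[OF hs] by simp
  qed (use Sc Si in auto)
  have GS: "G \<subseteq> S"
    using assms(3) Shs small unfolding gen_by_small_support_def generated_homeo_def by blast
  have FG: "\<forall>\<gamma>\<in>G. F \<gamma> \<in> G" using GS unfolding S_def by blast
  define R where "R = F ` G"
  have RG: "R \<subseteq> G" unfolding R_def using FG by blast
  have Rc: "\<forall>a\<in>R. \<forall>b\<in>R. a \<circ> b \<in> R"
  proof (intro ballI)
    fix a b assume "a \<in> R" "b \<in> R"
    then obtain a' b' where "a' \<in> G" "b' \<in> G" "a = F a'" "b = F b'" unfolding R_def by blast
    hence "a \<circ> b = F (a' \<circ> b')" "a' \<circ> b' \<in> G" using Fcomp hs_comp[OF hs] by auto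
    thus "a \<circ> b \<in> R" unfolding R_def by blast
  qed
  have Ri: "\<forall>a\<in>R. inv a \<in> R"
  proof (intro ballI)
    fix a assume "a \<in> R"
    then obtain a' where a': "a' \<in> G" "a = F a'" unfolding R_def by blast
    hence "inv a = F (inv a')" using Finv[OF hsG(1)[OF hs a'(1)]] by simp
    moreover have "inv a' \<in> G" using hsG(2)[OF hs a'(1)] .
    ultimately show "inv a \<in> R" unfolding R_def by blast
  qed
  have RI: "\<forall>x\<in>G. (\<forall>p. p \<notin> I \<longrightarrow> x p = p) \<longrightarrow> x \<in> R"
  proof (intro ballI impI)
    fix x assume x: "x \<in> G" "\<forall>p. p \<notin> I \<longrightarrow> x p = p"
    hence "x = F x" using FI by simp
    thus "x \<in> R" unfolding R_def using x(1) by blast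
  qed
  have RX: "\<forall>x\<in>G. (\<forall>p. p \<notin> J - I1 \<longrightarrow> x p = p) \<longrightarrow> x \<in> R"
  proof (intro ballI impI)
    fix x assume x: "x \<in> G" "\<forall>p. p \<notin> J - I1 \<longrightarrow> x p = p"
    define y where "y = inv g \<circ> x \<circ> g"
    have yG: "y \<in> G" unfolding y_def by (intro hs_comp[OF hs] g(1) x(1) hsG(2)[OF hs g(1)])
    have yf: "\<forall>p. p \<notin> UNIV - I1 \<longrightarrow> y p = p"
    proof (intro allI impI)
      fix p assume "p \<notin> UNIV - I1"
      hence p: "p \<in> I1" by blast
      have "g p \<notin> J - I1"
      proof
        assume gp: "g p \<in> J - I1"
        show False
        proof (cases "g p \<in> I")
          case True
          hence "g (g p) = g p" using gfix gp by blast
          hence "g p = p" using bij_is_inj[OF bg] by (metis injD)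
          thus False using gp p by simp
        next
          case False
          then obtain l where "l \<in> L" "g p = g l" using gp J_def by blast
          hence "l = p" using bij_is_inj[OF bg] by (metis injD)
          thus False using `l \<in> L` p I1(3) L_def by blast
        qed
      qed
      hence "x (g p) = g p" using x(2) by blast
      thus "y p = p" unfolding y_def by (simp add: bij_inv_l[OF bg])
    qed
    have "F y = g \<circ> y \<circ> inv g" using FX[OF yG yf] .
    also have "\<dots> = x" unfolding y_def by (rule ext) (simp add: bij_inv_r[OF bg])
    finally show "x \<in> R" unfolding R_def using yG by blast
  qed
  have JI: "J - I \<noteq> {}" using IJ by blast
  have H: "\<And>x Z. x \<in> G \<Longrightarrow> \<forall>p. p \<notin> J \<longrightarrow> x p = p \<Longrightarrow> clopen_C Z \<Longrightarrow> Z \<noteq> {}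
              \<Longrightarrow> Z \<subseteq> J \<Longrightarrow> \<forall>p\<in>Z. x p = p \<Longrightarrow> x \<in> R"
    by (rule GL[OF hs vg Jc Ic(1) _ JI I1 RG Rc Ri RI RX]) (use IJ in auto)
  have Jne: "J \<noteq> {}" "J \<noteq> UNIV" using JKC unfolding K_C_def by auto
  have surj: "pstab G (UNIV - J) \<subseteq> R"
  proof
    fix d assume "d \<in> pstab G (UNIV - J)"
    hence d: "d \<in> G" "\<forall>p. p \<notin> J \<longrightarrow> d p = p" unfolding pstab_def by auto
    show "d \<in> R" by (rule FRAG[OF hs vg Jc Jne Rc H d])
  qed
  have into: "R \<subseteq> pstab G (UNIV - J)"
    unfolding R_def pstab_def using FG by (auto simp: F_def conjF_def)
  have iso: "group_iso_on F G (pstab G (UNIV - J))"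
    unfolding group_iso_on_def bij_betw_def
  proof (intro conjI ballI)
    show "inj_on F G" unfolding inj_on_def F_def using conjF_inj[OF f1 f2] by blast
    show "F ` G = pstab G (UNIV - J)" using surj into R_def by blast
    fix a b show "F (b \<circ> a) = F b \<circ> F a" by (rule Fcomp)
  qed
  have agree: "\<forall>h\<in>G. \<forall>p. p \<in> I \<and> h p \<in> I \<longrightarrow> F h p = h p"
    unfolding F_def conjF_def \<phi>_def \<psi>_def J_def by auto
  show ?thesis using JKC IJ JK iso agree by blast
qed


end
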